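(* Let $\Omega=\{A\in\mathbb{R}^{m\times m}:A=A^{\top}\}$ be the set of real symmetric matrices, let $\mathcal{P}=\{P\in\mathbb{R}^{m\times m}:P^\top=P^{-1}\}$ be the set of orthogonal matrices, let $s(A,B,P)=\|AP-PB\|$ for all $A,B\in\Omega$, $P\in\mathcal{P}$, where $\|\cdot\|$ is an orthogonally invariant matrix norm, and let $d(A,B)=\min_{P\in\mathcal{P}} s(A,B,P)$. Then the Fermat distance function $d_F$ induced by $d$, and the $\mathcal{G}$-align distance function $d_\mathcal{G}$ induced by $s$, are pseudo $n$-metrics.
   Context: For $A_1,\dots,A_n\in\Omega$, write $A_{1:n}=(A_1,\dots,A_n)$, and let $A^i_{1:n,n+1}$ denote the sequence $A_{1:n}$ with $A_i$ replaced by $A_{n+1}$. A map $d:\Omega^n\to\mathbb{R}$ is a pseudo $n$-metric if for all $A_1,\dots,A_{n+1}\in\Omega$: $d(A_{1:n})\ge 0$; $d(A,\dots,A)=0$; $d(A_{1:n})=d(A_{\sigma(1:n)})$ for every permutation $\sigma$ of the indices; and $d(A_{1:n})\le\sum_{i=1}^n d(A^i_{1:n,n+1})$. The Fermat distance function induced by $d:\Omega^2\to\mathbb{R}$ is $d_F(A_{1:n})=\min_{B\in\Omega}\sum_{i=1}^n d(A_i,B)$. The $\mathcal{G}$-align distance function induced by $s:\Omega^2\times\mathcal{P}\to\mathbb{R}$ is $d_\mathcal{G}(A_{1:n})=\min_{P\in S}\frac12\sum_{i,j\in[n]} s(A_i,A_j,P_{i,j})$, where $S=\{\{P_{i,j}\}_{i,j\in[n]}: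 P_{i,j}\in\mathcal{P}\ \forall i,j;\ P_{i,k}P_{k,j}=P_{i,j}\ \forall i,j,k;\ P_{i,i}=I\ \forall i\}$. A matrix norm is orthogonally invariant if $\|PM\|=\|MP\|=\|M\|$ for every orthogonal $P$. *)

theory Defs
  imports "HOL-Analysis.Analysis" "HOL-Combinatorics.Permutations"
begin

text \<open>Sequences A_{1:n} are represented as lists of length n (0-based indices).
  The sequence with A_i replaced by A_{n+1} = a is the list update xs[i := a].\<close>

definition pseudo_n_metric :: "'a set \<Rightarrow> nat \<Rightarrow> ('a list \<Rightarrow> real) \<Rightarrow> bool" where
  "pseudo_n_metric \<Omega> n d \<longleftrightarrow>
     (\<forall>xs. set xs \<subseteq> \<Omega> \<and> length xs = n \<longrightarrow> d xs \<ge> 0) \<and>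
     (\<forall>a\<in>\<Omega>. d (replicate n a) = 0) \<and>
     (\<forall>xs \<sigma>. set xs \<subseteq> \<Omega> \<and> length xs = n \<and> \<sigma> permutes {..<n} \<longrightarrow>
          d (map (\<lambda>i. xs ! \<sigma> i) [0..<n]) = d xs) \<and>
     (\<forall>xs a. set xs \<subseteq> \<Omega> \<and> length xs = n \<and> a \<in> \<Omega> \<longrightarrow>
          d xs \<le> (\<Sum>i<n. d (xs[i := a])))"

text \<open>Fermat distance induced by d on \<Omega>: min over B in \<Omega> of sum_i d(A_i, B)
  (written as infimum; the minimum is attained in the situation of the theorem).\<close>
definition fermat_dist :: "'a set \<Rightarrow> ('a \<Rightarrow> 'a \<Rightarrow> real) \<Rightarrow> 'a list \<Rightarrow> real" where
  "fermat_dist \<Omega> d xs = (INF B\<in>\<Omega>. (\<Sum>i<length xs. d (xs ! i) B))"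

text \<open>Consistent families {P_ij}_{i,j in [n]} with values in \<P>.\<close>
definition align_families :: "'p set \<Rightarrow> ('p \<Rightarrow> 'p \<Rightarrow> 'p) \<Rightarrow> 'p \<Rightarrow> nat \<Rightarrow> (nat \<Rightarrow> nat \<Rightarrow> 'p) set" where
  "align_families \<P> mul I n = {P. (\<forall>i<n. \<forall>j<n. P i j \<in> \<P>) \<and>
      (\<forall>i<n. \<forall>j<n. \<forall>k<n. mul (P i k) (P k j) = P i j) \<and> (\<forall>i<n. P i i = I)}"

text \<open>G-align distance induced by s (matrix version: product **, identity mat 1).\<close>
definition galign_dist :: "('a \<Rightarrow> 'a \<Rightarrow> real^'m^'m \<Rightarrow> real) \<Rightarrow> (real^'m^'m) set \<Rightarrow> 'a list \<Rightarrow> real" where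
  "galign_dist s \<P> xs = (INF P\<in>align_families \<P> (**) (mat 1) (length xs).
      (1/2) * (\<Sum>i<length xs. \<Sum>j<length xs. s (xs ! i) (xs ! j) (P i j)))"

definition sym_matrices :: "(real^'m^'m) set" where
  "sym_matrices = {A. transpose A = A}"

definition orth_matrices :: "(real^'m^'m) set" where
  "orth_matrices = {P. orthogonal_matrix P}"

text \<open>Orthogonally invariant matrix norm (norm axioms plus invariance).\<close>
definition orth_inv_matrix_norm :: "(real^'m^'m \<Rightarrow> real) \<Rightarrow> bool" where
  "orth_inv_matrix_norm N \<longleftrightarrow>
     (\<forall>M. N M \<ge> 0) \<and> (\<forall>M. N M = 0 \<longleftrightarrow> M = 0) \<and>
     (\<forall>c M. N (c *\<^sub>R M) = \<bar>c\<bar> * N M) \<and>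
     (\<forall>M M'. N (M + M') \<le> N M + N M') \<and>
     (\<forall>P M. orthogonal_matrix P \<longrightarrow> N (P ** M) = N M \<and> N (M ** P) = N M)"

end

theory Submission
  imports Defs
begin

lemma mm_diff_l: "(A::real^'n^'n) ** (B - C) = A ** B - A ** C"
  by (simp add: vec_eq_iff matrix_matrix_mult_def sum_subtractf right_diff_distrib)
lemma mm_diff_r: "((B::real^'n^'n) - C) ** A = B ** A - C ** A"
  by (simp add: vec_eq_iff matrix_matrix_mult_def sum_subtractf left_diff_distrib)
lemma orthTQ: "orthogonal_matrix (Q::real^'n^'n) \<Longrightarrow> transpose Q ** Q = mat 1"
  by (simp add: orthogonal_matrix_def)
lemma orthQT: "orthogonal_matrix (Q::real^'n^'n) \<Longrightarrow> Q ** transpose Q = mat 1"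
  by (simp add: orthogonal_matrix_def)
lemma orthTQ': "orthogonal_matrix (Q::real^'n^'n) \<Longrightarrow> transpose Q ** (Q ** X) = X"
  by (simp add: matrix_mul_assoc orthTQ)
lemma orthQT': "orthogonal_matrix (Q::real^'n^'n) \<Longrightarrow> Q ** (transpose Q ** X) = X"
  by (simp add: matrix_mul_assoc orthQT)

lemma perm_sum:
  assumes "\<sigma> permutes {..<n}"
  shows "(\<Sum>i<n. g (\<sigma> i)) = (\<Sum>i<n. (g i :: real))"
proof -
  have "sum g {..<n} = sum (g \<circ> \<sigma>) {..<n}" by (rule sum.permute[OF assms])
  thus ?thesis by (simp add: comp_def)
qed

lemma perm_inv_list:
  assumes "\<sigma> permutes {..<n}" "length xs = n"
  shows "map (\<lambda>i. (map (\<lambda>i. xs ! \<sigma> i) [0..<n]) ! inv \<sigma> i) [0..<n] = xs"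
proof (rule nth_equalityI)
  fix i assume "i < length (map (\<lambda>i. (map (\<lambda>i. xs ! \<sigma> i) [0..<n]) ! inv \<sigma> i) [0..<n])"
  hence i: "i < n" by simp
  have "inv \<sigma> i < n" using permutes_in_image[OF permutes_inv[OF assms(1)]] i by simp
  thus "map (\<lambda>i. (map (\<lambda>i. xs ! \<sigma> i) [0..<n]) ! inv \<sigma> i) [0..<n] ! i = xs ! i"
    using i permutes_inverses(1)[OF assms(1)] by simp
qed (use assms in simp)

section \<open>Fermat distance\<close>

lemma fermat_pnm:
  fixes d :: "'a \<Rightarrow> 'a \<Rightarrow> real"
  assumes ne: "\<Omega> \<noteq> {}"
    and nn: "\<And>x y. d x y \<ge> 0" and rf: "\<And>x. d x x = 0"
    and sy: "\<And>x y. d x y = d y x" and tr: "\<And>x y z. d x z \<le> d x y + d y z"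
  shows "pseudo_n_metric \<Omega> n (fermat_dist \<Omega> d)"
proof -
  let ?F = "fermat_dist \<Omega> d"
  have bdd: "bdd_below ((\<lambda>B. \<Sum>i<length xs. d (xs ! i) B) ` \<Omega>)" for xs
    by (rule bdd_belowI[where m=0]) (auto intro: sum_nonneg nn)
  have Fnn: "?F xs \<ge> 0" for xs
    unfolding fermat_dist_def by (rule cINF_greatest[OF ne]) (auto intro: sum_nonneg nn)
  have Fle: "?F xs \<le> (\<Sum>i<length xs. d (xs ! i) B)" if "B \<in> \<Omega>" for xs B
    unfolding fermat_dist_def by (rule cINF_lower[OF bdd that])
  have P2: "?F (replicate n a) = 0" if "a \<in> \<Omega>" for a
  proof -
    have "?F (replicate n a) \<le> (\<Sum>i<n. d (replicate n a ! i) a)"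
      using Fle[OF that, of "replicate n a"] by simp
    also have "\<dots> = 0" by (simp add: rf)
    finally show ?thesis using Fnn[of "replicate n a"] by linarith
  qed
  have P3: "?F (map (\<lambda>i. xs ! \<sigma> i) [0..<n]) = ?F xs"
    if "length xs = n" "\<sigma> permutes {..<n}" for xs \<sigma>
  proof -
    have "(\<Sum>i<n. d (map (\<lambda>i. xs ! \<sigma> i) [0..<n] ! i) B) = (\<Sum>i<n. d (xs ! i) B)" for B
    proof -
      have "(\<Sum>i<n. d (map (\<lambda>i. xs ! \<sigma> i) [0..<n] ! i) B) = (\<Sum>i<n. d (xs ! \<sigma> i) B)"
        by (rule sum.cong) auto
      also have "\<dots> = (\<Sum>i<n. d (xs ! i) B)" by (rule perm_sum[OF that(2)])
      finally show ?thesis .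
    qed
    thus ?thesis unfolding fermat_dist_def using that by simp
  qed
  have P4: "?F xs \<le> (\<Sum>i<n. ?F (xs[i := a]))"
    if "set xs \<subseteq> \<Omega>" "length xs = n" "a \<in> \<Omega>" for xs a
  proof (cases "n \<ge> 2")
    case False
    hence "n = 0 \<or> n = 1" by linarith
    hence "?F xs \<le> 0"
    proof
      assume "n = 0" thus ?thesis using Fle[of "hd (a # xs)" xs] that ne by auto
    next
      assume n1: "n = 1"
      hence "xs ! 0 \<in> \<Omega>" using that by auto
      thus ?thesis using Fle[of "xs ! 0" xs] that n1 by (simp add: rf)
    qed
    also have "0 \<le> (\<Sum>i<n. ?F (xs[i := a]))" by (rule sum_nonneg) (simp add: Fnn)
    finally show ?thesis .
  next
    case True
    let ?x = "xs ! 0"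
    have h1: "?F xs - d ?x a \<le> ?F (xs[0 := a])"
      unfolding fermat_dist_def[of _ _ "xs[0 := a]"]
    proof (rule cINF_greatest[OF ne])
      fix B assume B: "B \<in> \<Omega>"
      have "?F xs \<le> (\<Sum>i<n. d (xs ! i) B)" using Fle[OF B, of xs] that by simp
      also have "\<dots> \<le> (\<Sum>i<n. d (xs[0 := a] ! i) B + (if i = 0 then d ?x a else 0))"
      proof (rule sum_mono)
        fix i assume "i \<in> {..<n}"
        thus "d (xs ! i) B \<le> d (xs[0 := a] ! i) B + (if i = 0 then d ?x a else 0)"
          using tr[where x="?x" and y=a and z=B] that True by (cases "i = 0") auto
      qed
      also have "\<dots> = (\<Sum>i<n. d (xs[0 := a] ! i) B) + d ?x a"
        using True by (simp add: sum.distrib)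
      finally show "?F xs - d ?x a \<le> (\<Sum>i<length (xs[0 := a]). d (xs[0 := a] ! i) B)"
        using that by simp
    qed
    have h2: "d ?x a \<le> ?F (xs[1 := a])"
      unfolding fermat_dist_def[of _ _ "xs[1 := a]"]
    proof (rule cINF_greatest[OF ne])
      fix B assume B: "B \<in> \<Omega>"
      have "d ?x a \<le> d ?x B + d B a" by (rule tr)
      also have "\<dots> = (\<Sum>i\<in>{0,1}. d (xs[1 := a] ! i) B)"
        using True that by (simp add: sy[of B a])
      also have "\<dots> \<le> (\<Sum>i<n. d (xs[1 := a] ! i) B)"
        by (rule sum_mono2) (use True in \<open>auto intro: nn\<close>)
      finally show "d ?x a \<le> (\<Sum>i<length (xs[1 := a]). d (xs[1 := a] ! i) B)"
        using that by simp
    qed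
    have h3: "?F (xs[0 := a]) + ?F (xs[1 := a]) \<le> (\<Sum>i<n. ?F (xs[i := a]))"
    proof -
      have "?F (xs[0 := a]) + ?F (xs[1 := a]) = (\<Sum>i\<in>{0,1}. ?F (xs[i := a]))" by simp
      also have "\<dots> \<le> (\<Sum>i<n. ?F (xs[i := a]))"
        by (rule sum_mono2) (use True in \<open>auto intro: Fnn\<close>)
      finally show ?thesis .
    qed
    show ?thesis using h1 h2 h3 by linarith
  qed
  show ?thesis unfolding pseudo_n_metric_def
    using Fnn P2 P3 P4 by auto
qed


lemma sum_if_calc:
  fixes A :: "nat \<Rightarrow> nat \<Rightarrow> real"
  assumes "0 < n"
  shows "(\<Sum>i<n. \<Sum>j<n. A i j + (if i = 0 then S else 0)
        + (if j = 0 then S else 0) - (if i = 0 then (if j = 0 then 2 * S else 0) else 0))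
   = (\<Sum>i<n. \<Sum>j<n. A i j) + 2 * (real n - 1) * S"
proof -
  have e1: "(\<Sum>i<n. \<Sum>j<n. (if i = 0 then S else 0)) = real n * S"
    using assms by (simp add: if_distrib cong: if_cong)
  have e2: "(\<Sum>i<n. \<Sum>j<n. (if j = 0 then S else 0)) = real n * S"
    using assms by simp
  have e3i: "(\<Sum>j<n. (if i = 0 then (if j = 0 then 2 * S else 0) else 0)) = (if i = 0 then 2 * S else 0)" for i
    using assms by (cases "i = 0") simp_all
  have e3: "(\<Sum>i<n. \<Sum>j<n. (if i = 0 then (if j = 0 then 2 * S else 0) else 0)) = 2 * S"
    using assms by (simp only: e3i) simp
  have "(\<Sum>i<n. \<Sum>j<n. A i j + (if i = 0 then S else 0)
        + (if j = 0 then S else 0) - (if i = 0 then (if j = 0 then 2 * S else 0) else 0))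
    = (\<Sum>i<n. \<Sum>j<n. A i j) + (\<Sum>i<n. \<Sum>j<n. (if i = 0 then S else 0))
      + (\<Sum>i<n. \<Sum>j<n. (if j = 0 then S else 0))
      - (\<Sum>i<n. \<Sum>j<n. (if i = 0 then (if j = 0 then 2 * S else 0) else 0))"
    by (simp only: sum.distrib sum_subtractf)
  thus ?thesis using e1 e2 e3 by (simp add: algebra_simps)
qed

section \<open>Norm facts\<close>

locale oinorm =
  fixes N :: "real^'m^'m \<Rightarrow> real"
  assumes oin: "orth_inv_matrix_norm N"
begin

lemma N_nonneg: "N M \<ge> 0" using oin by (simp add: orth_inv_matrix_norm_def)
lemma N_0: "N 0 = 0" using oin by (simp add: orth_inv_matrix_norm_def)
lemma N_tri: "N (M + M') \<le> N M + N M'" using oin by (simp add: orth_inv_matrix_norm_def)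
lemma N_l: "orthogonal_matrix P \<Longrightarrow> N (P ** M) = N M" using oin by (simp add: orth_inv_matrix_norm_def)
lemma N_r: "orthogonal_matrix P \<Longrightarrow> N (M ** P) = N M" using oin by (simp add: orth_inv_matrix_norm_def)
lemma N_neg: "N (- M) = N M"
proof -
  have "N ((-1) *\<^sub>R M) = \<bar>-1\<bar> * N M" using oin by (simp only: orth_inv_matrix_norm_def)
  thus ?thesis by simp
qed
lemma N_sym: "N (A - B) = N (B - A)"
  using N_neg[of "A - B"] by simp
lemma N_tri3: "N (A - C) \<le> N (A - B) + N (B - C)"
  using N_tri[of "A - B" "B - C"] by simp

definition ss :: "real^'m^'m \<Rightarrow> real^'m^'m \<Rightarrow> real^'m^'m \<Rightarrow> real" where
  "ss A B P = N (A ** P - P ** B)"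
definition dd :: "real^'m^'m \<Rightarrow> real^'m^'m \<Rightarrow> real" where
  "dd A B = (INF P\<in>orth_matrices. ss A B P)"

lemma orth_ne: "orth_matrices \<noteq> {}"
  using orthogonal_matrix_id by (auto simp: orth_matrices_def)

lemma dd_le: "orthogonal_matrix (P::real^'m^'m) \<Longrightarrow> dd A B \<le> ss A B P"
  unfolding dd_def
  by (rule cINF_lower) (auto simp: orth_matrices_def ss_def intro!: bdd_belowI[where m=0] N_nonneg)

lemma dd_nonneg: "dd A B \<ge> 0"
  unfolding dd_def by (rule cINF_greatest[OF orth_ne]) (simp add: ss_def N_nonneg)

lemma dd_refl: "dd A A = 0"
  using dd_le[OF orthogonal_matrix_id, of A A] dd_nonneg[of A A] by (simp add: ss_def N_0)

lemma ss_alt: "orthogonal_matrix (P::real^'m^'m) \<Longrightarrow> ss A B P = N (transpose P ** A ** P - B)"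
proof -
  assume P: "orthogonal_matrix P"
  have "ss A B P = N (transpose P ** (A ** P - P ** B))" by (simp add: ss_def N_l P)
  also have "transpose P ** (A ** P - P ** B) = transpose P ** A ** P - B"
    by (simp add: mm_diff_l matrix_mul_assoc orthTQ P)
  finally show ?thesis .
qed

lemma dd_sym_le: "dd A B \<le> dd B A"
  unfolding dd_def[of B A]
proof (rule cINF_greatest[OF orth_ne])
  fix P :: "real^'m^'m" assume "P \<in> orth_matrices"
  hence P: "orthogonal_matrix P" by (simp add: orth_matrices_def)
  have "dd A B \<le> ss A B (transpose P)" by (rule dd_le) (simp add: P)
  also have "\<dots> = N (P ** A ** transpose P - B)" by (simp add: ss_alt P)
  also have "\<dots> = N ((P ** A ** transpose P - B) ** P)" by (simp add: N_r P)
  also have "(P ** A ** transpose P - B) ** P = P ** A - B ** P"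
    by (simp add: mm_diff_r matrix_mul_assoc[symmetric] orthTQ P)
  also have "N (P ** A - B ** P) = ss B A P" by (simp add: ss_def N_sym)
  finally show "dd A B \<le> ss B A P" .
qed

lemma dd_sym: "dd A B = dd B A"
  using dd_sym_le[of A B] dd_sym_le[of B A] by simp

lemma dd_tri: "dd A C \<le> dd A B + dd B C"
proof -
  have "dd A C - ss B C Q \<le> dd A B" if Q: "orthogonal_matrix Q" for Q :: "real^'m^'m"
    unfolding dd_def[of A B]
  proof (rule cINF_greatest[OF orth_ne])
    fix P :: "real^'m^'m" assume "P \<in> orth_matrices"
    hence P: "orthogonal_matrix P" by (simp add: orth_matrices_def)
    have "dd A C \<le> ss A C (P ** Q)" by (rule dd_le) (simp add: orthogonal_matrix_mul P Q)
    also have "\<dots> \<le> N (A ** P ** Q - P ** B ** Q) + N (P ** B ** Q - P ** Q ** C)"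
      unfolding ss_def using N_tri3 by (simp add: matrix_mul_assoc)
    also have "A ** P ** Q - P ** B ** Q = (A ** P - P ** B) ** Q" by (simp add: mm_diff_r)
    also have "P ** B ** Q - P ** Q ** C = P ** (B ** Q - Q ** C)"
      by (simp add: mm_diff_l matrix_mul_assoc)
    finally show "dd A C - ss B C Q \<le> ss A B P"
      by (simp add: ss_def N_l N_r P Q)
  qed
  hence "dd A C - dd A B \<le> dd B C"
    unfolding dd_def[of B C]
    by (intro cINF_greatest[OF orth_ne]) (force simp: orth_matrices_def)
  thus ?thesis by simp
qed

end

context oinorm
begin

abbreviation "AF n \<equiv> align_families orth_matrices (**) (mat 1::real^'m^'m) n"

definition cost :: "(real^'m^'m) list \<Rightarrow> (nat \<Rightarrow> nat \<Rightarrow> real^'m^'m) \<Rightarrow> real" where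
  "cost ys P = (1/2) * (\<Sum>i<length ys. \<Sum>j<length ys. ss (ys ! i) (ys ! j) (P i j))"

lemma G_eq: "galign_dist ss orth_matrices ys = (INF P\<in>AF (length ys). cost ys P)"
  by (simp add: galign_dist_def cost_def)

lemma cost_nonneg: "cost ys P \<ge> 0"
  unfolding cost_def by (auto intro!: sum_nonneg simp: ss_def N_nonneg)

lemma fam_of:
  assumes "\<And>i. i < n \<Longrightarrow> orthogonal_matrix (R i)"
  shows "(\<lambda>i j. R i ** transpose (R j)) \<in> AF n"
  using assms by (auto simp: align_families_def orth_matrices_def orthogonal_matrix_mul
      matrix_mul_assoc[symmetric] orthTQ' orthQT)

lemma const_fam: "(\<lambda>i j. mat 1) \<in> AF n"
  using fam_of[of n "\<lambda>i. mat 1"] by (simp add: orthogonal_matrix_id)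

lemma AF_ne: "AF n \<noteq> {}" using const_fam by blast

lemma G_le: "P \<in> AF (length ys) \<Longrightarrow> galign_dist ss orth_matrices ys \<le> cost ys P"
  unfolding G_eq
  by (rule cINF_lower) (auto intro!: bdd_belowI[where m=0] cost_nonneg)

lemma G_nonneg: "galign_dist ss orth_matrices ys \<ge> 0"
  unfolding G_eq by (rule cINF_greatest[OF AF_ne]) (rule cost_nonneg)

lemma key_L:
  assumes U: "orthogonal_matrix (U::real^'m^'m)" and V: "orthogonal_matrix V"
  shows "N (X ** (U ** transpose V) - (U ** transpose V) ** Y)
       = N (transpose U ** X ** U - transpose V ** Y ** V)"
proof -
  have "N (X ** (U ** transpose V) - (U ** transpose V) ** Y)
      = N (transpose U ** (X ** (U ** transpose V) - (U ** transpose V) ** Y) ** V)"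
    by (simp add: N_l N_r U V)
  also have "transpose U ** (X ** (U ** transpose V) - (U ** transpose V) ** Y) ** V
      = transpose U ** X ** U - transpose V ** Y ** V"
    by (simp add: mm_diff_l mm_diff_r matrix_mul_assoc[symmetric] orthTQ orthTQ' U V)
  finally show ?thesis .
qed

lemma fam_decomp:
  assumes Q: "Q \<in> AF n" and i: "i < n" and j: "j < n"
  shows "Q i j = Q i 0 ** transpose (Q j 0)" "orthogonal_matrix (Q i 0)" "Q 0 0 = mat 1"
proof -
  have n: "0 < n" using i by simp
  have QQ: "\<And>i j k. i<n \<Longrightarrow> j<n \<Longrightarrow> k<n \<Longrightarrow> Q i k ** Q k j = Q i j"
    and Qo: "\<And>i j. i<n \<Longrightarrow> j<n \<Longrightarrow> orthogonal_matrix (Q i j)"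
    and Qd: "\<And>i. i<n \<Longrightarrow> Q i i = mat 1"
    using Q by (auto simp: align_families_def orth_matrices_def)
  have "transpose (Q j 0) = transpose (Q j 0) ** (Q j 0 ** Q 0 j)"
    using QQ[of j j 0] Qd[of j] j n by simp
  also have "\<dots> = Q 0 j" using Qo[of j 0] j n by (simp add: orthTQ')
  finally have "transpose (Q j 0) = Q 0 j" .
  thus "Q i j = Q i 0 ** transpose (Q j 0)" using QQ[of i j 0] i j n by simp
  show "orthogonal_matrix (Q i 0)" using Qo i n by simp
  show "Q 0 0 = mat 1" using Qd n by simp
qed

lemma cost_fam:
  assumes "\<And>i. i < length ys \<Longrightarrow> orthogonal_matrix (R i)"
    and "\<And>i j. i < length ys \<Longrightarrow> j < length ys \<Longrightarrow> Q i j = R i ** transpose (R j)"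
  shows "cost ys Q = (1/2) * (\<Sum>i<length ys. \<Sum>j<length ys.
      N (transpose (R i) ** (ys ! i) ** R i - transpose (R j) ** (ys ! j) ** R j))"
  unfolding cost_def ss_def
  by (intro arg_cong[where f="\<lambda>x. (1/2) * x"] sum.cong refl) (simp add: assms key_L)

end

context oinorm
begin

lemma g1:
  assumes len: "length xs = Suc m" and Q: "Q \<in> AF (Suc m)" and P: "orthogonal_matrix P"
  shows "galign_dist ss orth_matrices xs \<le> cost (xs[0 := a]) Q + real m * ss (xs ! 0) a P"
proof -
  let ?n = "Suc m"
  let ?ys = "xs[0 := a]"
  let ?S = "ss (xs ! 0) a P"
  define R where "R i = Q i 0" for i
  define R' where "R' i = (if i = 0 then P else Q i 0)" for i
  have Ro: "orthogonal_matrix (R i)" if "i < ?n" for i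
    using fam_decomp(2)[OF Q that that] by (simp add: R_def)
  have R'o: "orthogonal_matrix (R' i)" if "i < ?n" for i
    using Ro[OF that] P by (simp add: R_def R'_def)
  define g where "g i = transpose (R i) ** (?ys ! i) ** R i" for i
  define h where "h i = transpose (R' i) ** (xs ! i) ** R' i" for i
  have cQ: "cost ?ys Q = (1/2) * (\<Sum>i<?n. \<Sum>j<?n. N (g i - g j))"
  proof -
    have "cost ?ys Q = (1/2) * (\<Sum>i<length ?ys. \<Sum>j<length ?ys.
      N (transpose (R i) ** (?ys ! i) ** R i - transpose (R j) ** (?ys ! j) ** R j))"
    proof (rule cost_fam)
      fix i assume "i < length ?ys" thus "orthogonal_matrix (R i)" using Ro len by simp
    next
      fix i j assume "i < length ?ys" "j < length ?ys"
      thus "Q i j = R i ** transpose (R j)" unfolding R_def using len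
        by (intro fam_decomp(1)[OF Q]) simp_all
    qed
    thus ?thesis by (simp add: len g_def)
  qed
  have T: "(\<lambda>i j. R' i ** transpose (R' j)) \<in> AF ?n" by (rule fam_of) (rule R'o)
  have cT: "cost xs (\<lambda>i j. R' i ** transpose (R' j)) = (1/2) * (\<Sum>i<?n. \<Sum>j<?n. N (h i - h j))"
  proof -
    have "cost xs (\<lambda>i j. R' i ** transpose (R' j)) = (1/2) * (\<Sum>i<length xs. \<Sum>j<length xs.
      N (transpose (R' i) ** (xs ! i) ** R' i - transpose (R' j) ** (xs ! j) ** R' j))"
      by (rule cost_fam) (auto simp: len R'o)
    thus ?thesis by (simp add: len h_def)
  qed
  have hg: "h i = g i" if "i \<noteq> 0" for i
    using that by (simp add: h_def g_def R_def R'_def)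
  have "Q 0 0 = mat 1" using fam_decomp(3)[OF Q, of 0 0] by simp
  hence g0: "g 0 = a" using len by (simp add: g_def R_def)
  have h0: "N (h 0 - g 0) = ?S" using P by (simp add: g0 h_def R'_def ss_alt)
  have tw: "N (h i - h j) \<le> N (g i - g j) + (if i = 0 then ?S else 0) + (if j = 0 then ?S else 0)
        - (if i = 0 then (if j = 0 then 2 * ?S else 0) else 0)" for i j
  proof (cases "i = 0"; cases "j = 0")
    assume "i = 0" "j = 0" thus ?thesis by (simp add: N_0)
  next
    assume "i = 0" "j \<noteq> 0"
    thus ?thesis using N_tri3[of "h 0" "g j" "g 0"] h0 hg[of j] by simp
  next
    assume "i \<noteq> 0" "j = 0"
    thus ?thesis using N_tri3[of "g i" "h 0" "g 0"] h0 hg[of i] N_sym[of "g 0" "h 0"] by simp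
  next
    assume "i \<noteq> 0" "j \<noteq> 0" thus ?thesis using hg by simp
  qed
  have "(\<Sum>i<?n. \<Sum>j<?n. N (h i - h j)) \<le> (\<Sum>i<?n. \<Sum>j<?n. N (g i - g j) + (if i = 0 then ?S else 0)
        + (if j = 0 then ?S else 0) - (if i = 0 then (if j = 0 then 2 * ?S else 0) else 0))"
    by (intro sum_mono tw)
  also have "\<dots> = (\<Sum>i<?n. \<Sum>j<?n. N (g i - g j)) + 2 * real m * ?S"
    using sum_if_calc[of "Suc m" "\<lambda>i j. N (g i - g j)" ?S] by simp
  finally have "cost xs (\<lambda>i j. R' i ** transpose (R' j)) \<le> cost ?ys Q + real m * ?S"
    unfolding cT cQ by linarith
  moreover have "galign_dist ss orth_matrices xs \<le> cost xs (\<lambda>i j. R' i ** transpose (R' j))"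
    by (rule G_le) (use T len in simp)
  ultimately show ?thesis by linarith
qed

end

context oinorm
begin

lemma G_perm_le:
  assumes s: "\<sigma> permutes {..<n}" and len: "length xs = n"
  shows "galign_dist ss orth_matrices (map (\<lambda>i. xs ! \<sigma> i) [0..<n])
       \<le> galign_dist ss orth_matrices xs"
  unfolding G_eq[of xs]
proof (rule cINF_greatest[OF AF_ne])
  fix P assume P: "P \<in> AF (length xs)"
  let ?ys = "map (\<lambda>i. xs ! \<sigma> i) [0..<n]"
  have si: "\<sigma> i < n" if "i < n" for i using permutes_in_image[OF s] that by simp
  have Q: "(\<lambda>i j. P (\<sigma> i) (\<sigma> j)) \<in> AF (length ?ys)"
    using P si len by (simp add: align_families_def)
  have "galign_dist ss orth_matrices ?ys \<le> cost ?ys (\<lambda>i j. P (\<sigma> i) (\<sigma> j))"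
    by (rule G_le[OF Q])
  also have "\<dots> = (1/2) * (\<Sum>i<n. \<Sum>j<n. ss (xs ! \<sigma> i) (xs ! \<sigma> j) (P (\<sigma> i) (\<sigma> j)))"
    unfolding cost_def by simp
  also have "\<dots> = (1/2) * (\<Sum>i<n. \<Sum>j<n. ss (xs ! \<sigma> i) (xs ! j) (P (\<sigma> i) j))"
    by (subst perm_sum[OF s, of "\<lambda>j. ss (xs ! \<sigma> _) (xs ! j) (P (\<sigma> _) j)"]) (rule refl)
  also have "\<dots> = (1/2) * (\<Sum>i<n. \<Sum>j<n. ss (xs ! i) (xs ! j) (P i j))"
    using perm_sum[OF s, of "\<lambda>i. \<Sum>j<n. ss (xs ! i) (xs ! j) (P i j)"] by simp
  also have "\<dots> = cost xs P" unfolding cost_def len ..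
  finally show "galign_dist ss orth_matrices ?ys \<le> cost xs P" .
qed

lemma galign_pnm: "pseudo_n_metric \<Omega> n (galign_dist ss orth_matrices)"
proof -
  let ?G = "galign_dist ss orth_matrices"
  have P2: "?G (replicate n a) = 0" for a
  proof -
    have "?G (replicate n a) \<le> cost (replicate n a) (\<lambda>i j. mat 1)"
      by (rule G_le) (rule const_fam)
    also have "\<dots> = 0" by (simp add: cost_def ss_def N_0)
    finally show ?thesis using G_nonneg[of "replicate n a"] by linarith
  qed
  have P3: "?G (map (\<lambda>i. xs ! \<sigma> i) [0..<n]) = ?G xs"
    if "length xs = n" "\<sigma> permutes {..<n}" for xs \<sigma>
  proof -
    let ?ys = "map (\<lambda>i. xs ! \<sigma> i) [0..<n]"
    have "?G (map (\<lambda>i. ?ys ! inv \<sigma> i) [0..<n]) \<le> ?G ?ys"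
      by (rule G_perm_le[OF permutes_inv[OF that(2)]]) simp
    hence "?G xs \<le> ?G ?ys" using perm_inv_list[OF that(2,1)] by simp
    thus ?thesis using G_perm_le[OF that(2,1)] by simp
  qed
  have P4: "?G xs \<le> (\<Sum>i<n. ?G (xs[i := a]))" if len: "length xs = n" for xs a
  proof (cases "n \<ge> 2")
    case False
    have "?G xs \<le> cost xs (\<lambda>i j. mat 1)" by (rule G_le) (rule const_fam)
    also have "\<dots> = 0"
    proof -
      have "n = 0 \<or> n = 1" using False by linarith
      thus ?thesis using len by (auto simp: cost_def ss_def N_0)
    qed
    also have "0 \<le> (\<Sum>i<n. ?G (xs[i := a]))" by (rule sum_nonneg) (simp add: G_nonneg)
    finally show ?thesis .
  next
    case True
    then obtain m where nm: "n = Suc m" and m: "m \<ge> 1" by (cases n) auto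
    let ?x = "xs ! 0"
    have g2a: "?G xs - ?G (xs[0 := a]) \<le> real m * ss ?x a P" if P: "orthogonal_matrix P" for P
    proof -
      have "?G xs - real m * ss ?x a P \<le> ?G (xs[0 := a])"
        unfolding G_eq[of "xs[0 := a]"]
      proof (rule cINF_greatest[OF AF_ne])
        fix Q assume "Q \<in> AF (length (xs[0 := a]))"
        hence Q: "Q \<in> AF (Suc m)" using len nm by simp
        show "?G xs - real m * ss ?x a P \<le> cost (xs[0 := a]) Q"
          using g1[OF len[unfolded nm] Q P, of a] by linarith
      qed
      thus ?thesis by linarith
    qed
    have "(?G xs - ?G (xs[0 := a])) / real m \<le> dd ?x a"
      unfolding dd_def
    proof (rule cINF_greatest[OF orth_ne])
      fix P :: "real^'m^'m" assume "P \<in> orth_matrices"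
      hence "?G xs - ?G (xs[0 := a]) \<le> real m * ss ?x a P"
        by (intro g2a) (simp add: orth_matrices_def)
      thus "(?G xs - ?G (xs[0 := a])) / real m \<le> ss ?x a P"
        using m by (simp add: divide_le_eq mult.commute)
    qed
    hence g2: "?G xs \<le> ?G (xs[0 := a]) + real m * dd ?x a"
      using m by (simp add: divide_le_eq mult.commute)
    have g3: "dd ?x a \<le> ?G (xs[i := a])" if i: "0 < i" "i < n" for i
      unfolding G_eq
    proof (rule cINF_greatest[OF AF_ne])
      let ?zs = "xs[i := a]"
      fix Q assume Q: "Q \<in> AF (length ?zs)"
      have Qo: "orthogonal_matrix (Q k j)" if "k < n" "j < n" for k j
        using Q that len by (auto simp: align_families_def orth_matrices_def)
      define f where "f k j = ss (?zs ! k) (?zs ! j) (Q k j)" for k j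
      have fnn: "f k j \<ge> 0" for k j by (simp add: f_def ss_def N_nonneg)
      have "f 0 i + f i 0 \<le> (\<Sum>j<n. f 0 j) + (\<Sum>j<n. f i j)"
        using i by (intro add_mono member_le_sum) (auto simp: fnn)
      also have "\<dots> = (\<Sum>k\<in>{0, i}. \<Sum>j<n. f k j)" using i by simp
      also have "\<dots> \<le> (\<Sum>k<n. \<Sum>j<n. f k j)"
        using i by (intro sum_mono2) (auto intro: sum_nonneg fnn)
      finally have A: "f 0 i + f i 0 \<le> (\<Sum>k<n. \<Sum>j<n. f k j)" .
      have "f 0 i \<ge> dd ?x a" using i len Qo[of 0 i] by (simp add: f_def dd_le)
      moreover have "f i 0 \<ge> dd ?x a" using i len Qo[of i 0] dd_le[of "Q i 0" a ?x]
        by (simp add: f_def dd_sym)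
      ultimately show "dd ?x a \<le> cost ?zs Q" using A len by (simp add: cost_def f_def)
    qed
    have "(\<Sum>i<n. ?G (xs[i := a])) = ?G (xs[0 := a]) + (\<Sum>i<m. ?G (xs[Suc i := a]))"
      unfolding nm by (rule sum.lessThan_Suc_shift)
    also have "(\<Sum>i<m. ?G (xs[Suc i := a])) \<ge> (\<Sum>i<m. dd ?x a)"
      by (rule sum_mono) (use g3 nm in auto)
    hence "?G (xs[0 := a]) + (\<Sum>i<m. ?G (xs[Suc i := a])) \<ge> ?G (xs[0 := a]) + real m * dd ?x a"
      by simp
    finally show ?thesis using g2 by linarith
  qed
  show ?thesis unfolding pseudo_n_metric_def using G_nonneg P2 P3 P4 by auto
qed

end

theorem theorem5:
  fixes N :: "real^'m^'m \<Rightarrow> real" and n :: nat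
    and s :: "real^'m^'m \<Rightarrow> real^'m^'m \<Rightarrow> real^'m^'m \<Rightarrow> real"
    and d :: "real^'m^'m \<Rightarrow> real^'m^'m \<Rightarrow> real"
  assumes "orth_inv_matrix_norm N"
    and "\<And>A B P. s A B P = N (A ** P - P ** B)"
    and "\<And>A B. d A B = (INF P\<in>orth_matrices. s A B P)"
  shows "pseudo_n_metric sym_matrices n (fermat_dist sym_matrices d)
       \<and> pseudo_n_metric sym_matrices n (galign_dist s orth_matrices)"
proof -
  interpret oinorm N by unfold_locales (rule assms(1))
  have s: "s = ss" by (intro ext) (simp add: assms(2) ss_def)
  have d: "d = dd" by (intro ext) (simp add: assms(3) s dd_def)
  have ne: "sym_matrices \<noteq> {}" by (auto simp: sym_matrices_def intro!: exI[of _ "mat 1"])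
  show ?thesis unfolding s d
    using fermat_pnm[where d=dd, OF ne dd_nonneg dd_refl dd_sym dd_tri] galign_pnm by blast
qed

end
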